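(* Let $p\ge 2$ and let $J$ be a periodic Jacobi operator on $\ell^2(\mathbb{Z})$ with period $p$, given by $(J\psi)_n=a_{n-1}\psi_{n-1}+b_n\psi_n+a_n\psi_{n+1}$, where $a_n>0$, $b_n\in\mathbb{R}$, $a_{n+p}=a_n$, $b_{n+p}=b_n$ for all $n$. Let $A:=(a_1\cdots a_p)^{1/p}$, and let $\sigma_n$ ($1\le n\le p$) and $\gamma_n$ ($1\le n\le p-1$) be the spectral bands and gaps of $J$. If $$4\min_{1\le n\le p-1}|\gamma_n|\ge\max\Big\{\max_{1\le n\le p}|\sigma_n|,\;4A\Big\},$$ then $$\min_{1\le n\le p}|\sigma_n|\le\frac{4A^p}{\big(\min_{1\le n\le p-1}|\gamma_n|\big)^{p-1}}.$$
   Context: Spectral structure: the spectrum of $J$ is $\sigma(J)=\{\lambda\in\mathbb{R}: |\Delta(\lambda)|\le 2\}$, where $\Delta(\lambda)=\operatorname{tr}\big(A_p(\lambda)A_{p-1}(\lambda)\cdots A_1(\lambda)\big)$ with $A_n(\lambda)=\begin{pmatrix}(\lambda-b_n)/a_n & -a_{n-1}/a_n\\ 1&0\end{pmatrix}$ (the discriminant, a real polynomial of degree $p$). It is a standard fact that this set is a union of $p$ closed intervals (bands) $\sigma_n=[\lambda_n^{\min},\lambda_n^{\max}]$, $1\le n\le p$, with $\lambda_n^{\min}<\lambda_n^{\max}\le\lambda_{n+1}^{\min}$ (bands may touch but do not overlap); on each band $\Delta$ is monotone and maps it onto $[-2,2]$. The spectral gaps are $\gamma_n=(\lambda_n^{\max},\lambda_{n+1}^{\min})$,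 $1\le n\le p-1$ (possibly empty). $|\cdot|$ denotes Lebesgue measure (length). *)

theory Defs
  imports "HOL-Analysis.Analysis"
begin

definition transfer :: "(int \<Rightarrow> real) \<Rightarrow> (int \<Rightarrow> real) \<Rightarrow> int \<Rightarrow> real \<Rightarrow> real^2^2" where
  "transfer a b n lam =
     vector [vector [(lam - b n) / a n, - a (n - 1) / a n], vector [1, 0]]"

fun monodromy :: "(int \<Rightarrow> real) \<Rightarrow> (int \<Rightarrow> real) \<Rightarrow> nat \<Rightarrow> real \<Rightarrow> real^2^2" where
  "monodromy a b 0 lam = mat 1"
| "monodromy a b (Suc k) lam = transfer a b (int (Suc k)) lam ** monodromy a b k lam"

definition discriminant :: "(int \<Rightarrow> real) \<Rightarrow> (int \<Rightarrow> real) \<Rightarrow> nat \<Rightarrow> real \<Rightarrow> real" where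
  "discriminant a b p lam = monodromy a b p lam $ 1 $ 1 + monodromy a b p lam $ 2 $ 2"

definition jacobi_spectrum :: "(int \<Rightarrow> real) \<Rightarrow> (int \<Rightarrow> real) \<Rightarrow> nat \<Rightarrow> real set" where
  "jacobi_spectrum a b p = {lam. \<bar>discriminant a b p lam\<bar> \<le> 2}"

text \<open>This characterizes the bands uniquely.\<close>
definition band_edges :: "(int \<Rightarrow> real) \<Rightarrow> (int \<Rightarrow> real) \<Rightarrow> nat \<Rightarrow> (nat \<Rightarrow> real) \<Rightarrow> (nat \<Rightarrow> real) \<Rightarrow> bool" where
  "band_edges a b p lmin lmax \<longleftrightarrow>
     (\<forall>n\<in>{1..p}. lmin n < lmax n) \<and>
     (\<forall>n\<in>{1..<p}. lmax n \<le> lmin (Suc n)) \<and>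
     jacobi_spectrum a b p = (\<Union>n\<in>{1..p}. {lmin n..lmax n}) \<and>
     (\<forall>n\<in>{1..p}. (mono_on {lmin n..lmax n} (discriminant a b p) \<or>
                   antimono_on {lmin n..lmax n} (discriminant a b p)) \<and>
                  discriminant a b p ` {lmin n..lmax n} = {-2..2})"

definition band_len :: "(nat \<Rightarrow> real) \<Rightarrow> (nat \<Rightarrow> real) \<Rightarrow> nat \<Rightarrow> real" where
  "band_len lmin lmax n = lmax n - lmin n"

definition gap_len :: "(nat \<Rightarrow> real) \<Rightarrow> (nat \<Rightarrow> real) \<Rightarrow> nat \<Rightarrow> real" where
  "gap_len lmin lmax n = lmin (Suc n) - lmax n"

definition geo_A :: "(int \<Rightarrow> real) \<Rightarrow> nat \<Rightarrow> real" where
  "geo_A a p = (\<Prod>n=1..p. a (int n)) powr (1 / real p)"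

end

theory Submission imports Defs "HOL-Computational_Algebra.Polynomial" begin

lemma mono_entries:
  "monodromy a b (Suc k) lam $ 1 $ 1 = (lam - b (int (Suc k))) / a (int (Suc k)) * monodromy a b k lam $ 1 $ 1 - a (int k) / a (int (Suc k)) * monodromy a b k lam $ 2 $ 1"
  "monodromy a b (Suc k) lam $ 1 $ 2 = (lam - b (int (Suc k))) / a (int (Suc k)) * monodromy a b k lam $ 1 $ 2 - a (int k) / a (int (Suc k)) * monodromy a b k lam $ 2 $ 2"
  "monodromy a b (Suc k) lam $ 2 $ 1 = monodromy a b k lam $ 1 $ 1"
  "monodromy a b (Suc k) lam $ 2 $ 2 = monodromy a b k lam $ 1 $ 2"
  by (simp_all add: matrix_matrix_mult_def sum_2 transfer_def)

lemma mono_poly: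
  assumes apos: "\<forall>n. a n > 0"
  shows "\<exists>P11 P12 P21 P22. (\<forall>lam. monodromy a b k lam $1$1 = poly P11 lam \<and> monodromy a b k lam $1$2 = poly P12 lam
     \<and> monodromy a b k lam $2$1 = poly P21 lam \<and> monodromy a b k lam $2$2 = poly P22 lam)
     \<and> degree P11 = k \<and> lead_coeff P11 = (\<Prod>i=1..k. 1 / a (int i))
     \<and> (P12 = 0 \<or> degree P12 < k) \<and> (P21 = 0 \<or> degree P21 < k) \<and> degree P22 \<le> k - 1"
proof (induction k)
  case 0
  show ?case
    by (rule exI[of _ 1], rule exI[of _ 0], rule exI[of _ 0], rule exI[of _ 1])
       (simp add: mat_def)
next
  case (Suc k)
  then obtain P11 P12 P21 P22 where ev: "\<forall>lam. monodromy a b k lam $1$1 = poly P11 lam \<and> monodromy a b k lam $1$2 = poly P12 lam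
     \<and> monodromy a b k lam $2$1 = poly P21 lam \<and> monodromy a b k lam $2$2 = poly P22 lam"
    and d11: "degree P11 = k" and l11: "lead_coeff P11 = (\<Prod>i=1..k. 1 / a (int i))"
    and d12: "P12 = 0 \<or> degree P12 < k" and d21: "P21 = 0 \<or> degree P21 < k" and d22: "degree P22 \<le> k - 1"
    by blast
  define c where "c = a (int k) / a (int (Suc k))"
  define L where "L = [:- b (int (Suc k)) / a (int (Suc k)), 1 / a (int (Suc k)):]"
  have aS: "a (int (Suc k)) > 0" using apos by blast
  have pL: "poly L lam = (lam - b (int (Suc k))) / a (int (Suc k))" for lam
    unfolding L_def using aS by (simp add: field_simps)
  have dL: "degree L = 1" and lL: "lead_coeff L = 1 / a (int (Suc k))" using aS unfolding L_def by auto
  have L0: "L \<noteq> 0" using dL by auto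
  have P110: "P11 \<noteq> 0" using l11 apos by (auto simp: prod_pos) (metis less_irrefl)
  have dLP: "degree (L * P11) = Suc k" using degree_mult_eq[OF L0 P110] dL d11 by simp
  have dsm: "degree (smult (- c) P21) < Suc k" using d21 degree_smult_le[of "-c" P21] by auto
  have n11: "degree (L * P11 + smult (- c) P21) = Suc k"
    using degree_add_eq_left[of "smult (- c) P21" "L * P11"] dLP dsm by simp
  have ln11: "lead_coeff (L * P11 + smult (- c) P21) = (\<Prod>i=1..Suc k. 1 / a (int i))"
  proof -
    have "lead_coeff (L * P11 + smult (- c) P21) = lead_coeff (L * P11)"
      using lead_coeff_add_le[of "smult (- c) P21" "L * P11"] dLP dsm by simp
    also have "\<dots> = 1 / a (int (Suc k)) * (\<Prod>i=1..k. 1 / a (int i))" by (simp add: lead_coeff_mult lL l11)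
    also have "\<dots> = (\<Prod>i=1..Suc k. 1 / a (int i))" by (simp add: prod.cl_ivl_Suc mult.commute)
    finally show ?thesis .
  qed
  have n12: "degree (L * P12 + smult (- c) P22) < Suc k"
  proof -
    have "degree (L * P12) < Suc k"
    proof (cases "P12 = 0")
      case True then show ?thesis by simp
    next
      case False
      then have "degree (L * P12) = 1 + degree P12" using degree_mult_eq[OF L0 False] dL by simp
      then show ?thesis using d12 False by simp
    qed
    moreover have "degree (smult (- c) P22) < Suc k" using d22 degree_smult_le[of "-c" P22] by linarith
    ultimately show ?thesis using degree_add_le by (meson degree_add_le_max max_less_iff_conj le_less_trans)
  qed
  have evS: "\<forall>lam. monodromy a b (Suc k) lam $1$1 = poly (L * P11 + smult (- c) P21) lam \<and> monodromy a b (Suc k) lam $1$2 = poly (L * P12 + smult (- c) P22) lam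
     \<and> monodromy a b (Suc k) lam $2$1 = poly P11 lam \<and> monodromy a b (Suc k) lam $2$2 = poly P12 lam"
  proof
    fix lam
    show "monodromy a b (Suc k) lam $1$1 = poly (L * P11 + smult (- c) P21) lam \<and> monodromy a b (Suc k) lam $1$2 = poly (L * P12 + smult (- c) P22) lam
     \<and> monodromy a b (Suc k) lam $2$1 = poly P11 lam \<and> monodromy a b (Suc k) lam $2$2 = poly P12 lam"
      unfolding mono_entries using ev pL[of lam] by (simp add: c_def algebra_simps)
  qed
  show ?case
    apply (rule exI[of _ "L * P11 + smult (- c) P21"], rule exI[of _ "L * P12 + smult (- c) P22"],
           rule exI[of _ P11], rule exI[of _ P12])
    using evS n11 ln11 n12 d11 d12 by auto
qed

lemma poly_roots_prod:
  fixes P :: "real poly"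
  assumes "finite S" "card S = degree P" "\<forall>z\<in>S. poly P z = 0" "P \<noteq> 0"
  shows "poly P x = lead_coeff P * (\<Prod>z\<in>S. x - z)"
  using assms
proof (induction S arbitrary: P rule: finite_induct)
  case empty
  then have "degree P = 0" by simp
  then obtain c where "P = [:c:]" by (meson degree_eq_zeroE)
  then show ?case by simp
next
  case (insert z S)
  have "poly P z = 0" using insert by simp
  then have "[:-z, 1:] dvd P" using poly_eq_0_iff_dvd by blast
  then obtain Q where PQ: "P = [:-z, 1:] * Q" by (meson dvdE)
  have Q0: "Q \<noteq> 0" using PQ insert.prems by auto
  have "degree ([:-z, 1:] * Q) = degree [:-z, 1:] + degree Q"
    by (rule degree_mult_eq) (use Q0 in auto)
  then have dP: "degree P = degree Q + 1" using PQ by simp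
  have "lead_coeff ([:-z, 1:] * Q) = lead_coeff [:-z, 1:] * lead_coeff Q" by (rule lead_coeff_mult)
  then have lP: "lead_coeff P = lead_coeff Q" using PQ by simp
  have "card S = degree Q" using insert dP by simp
  moreover have "\<forall>w\<in>S. poly Q w = 0"
  proof
    fix w assume w: "w \<in> S"
    then have "w \<noteq> z" using insert by auto
    moreover have "poly P w = 0" using insert w by simp
    ultimately show "poly Q w = 0" using PQ by simp
  qed
  ultimately have "poly Q x = lead_coeff Q * (\<Prod>z\<in>S. x - z)" using insert Q0 by blast
  moreover have "poly P x = (x - z) * poly Q x" by (simp only: PQ poly_mult) (simp add: algebra_simps)
  ultimately show ?case using lP insert by (simp add: algebra_simps)
qed

lemma endpoints_two:
  fixes f :: "real \<Rightarrow> real"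
  assumes "mono_on {l..u} f \<or> antimono_on {l..u} f" "f ` {l..u} = {-2..2}" "l \<le> u"
  shows "\<bar>f l\<bar> = 2 \<and> \<bar>f u\<bar> = 2"
proof -
  have "-2 \<in> f ` {l..u}" "2 \<in> f ` {l..u}" using assms(2) by auto
  then obtain y1 y2 where y1: "y1 \<in> {l..u}" "f y1 = -2" and y2: "y2 \<in> {l..u}" "f y2 = 2"
    by (metis imageE)
  have fl: "f l \<in> {-2..2}" "f u \<in> {-2..2}" using assms by auto
  have lI: "l \<in> {l..u}" "u \<in> {l..u}" using assms(3) by auto
  show ?thesis
  proof (cases "mono_on {l..u} f")
    case True
    have "f l \<le> f y1" using mono_onD[OF True lI(1) y1(1)] y1 by auto
    moreover have "f y2 \<le> f u" using mono_onD[OF True y2(1) lI(2)] y2 by auto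
    ultimately show ?thesis using fl y1 y2 by auto
  next
    case False
    then have am: "antimono_on {l..u} f" using assms(1) by blast
    have "f y2 \<le> f l" using monotone_onD[OF am lI(1) y2(1)] y2 by auto
    moreover have "f u \<le> f y1" using monotone_onD[OF am y1(1) lI(2)] y1 by auto
    ultimately show ?thesis using fl y1 y2 by auto
  qed
qed

lemma disc_poly:
  assumes apos: "\<forall>n. a n > 0" and p1: "p \<ge> 1"
  shows "\<exists>D. (\<forall>lam. discriminant a b p lam = poly D lam) \<and> degree D = p
            \<and> lead_coeff D = (\<Prod>i=1..p. 1 / a (int i))"
proof -
  obtain P11 P12 P21 P22 where ev: "\<forall>lam. monodromy a b p lam $1$1 = poly P11 lam \<and> monodromy a b p lam $1$2 = poly P12 lam
     \<and> monodromy a b p lam $2$1 = poly P21 lam \<and> monodromy a b p lam $2$2 = poly P22 lam"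
    and d11: "degree P11 = p" and l11: "lead_coeff P11 = (\<Prod>i=1..p. 1 / a (int i))"
    and d22: "degree P22 \<le> p - 1"
    using mono_poly[OF apos, of b p] by blast
  have lt: "degree P22 < degree P11" using d11 d22 p1 by linarith
  show ?thesis
    apply (rule exI[of _ "P11 + P22"])
    using ev degree_add_eq_left[OF lt] lead_coeff_add_le[OF lt] d11 l11
    by (auto simp: discriminant_def add.commute)
qed

lemma lmin_chain:
  assumes "\<forall>n\<in>{1..p}. lmin n < (lmax n :: real)" "\<forall>n\<in>{1..<p}. lmax n \<le> lmin (Suc n)"
  shows "j \<ge> 1 \<Longrightarrow> j + 1 + d \<le> p \<Longrightarrow> lmin (j + 1 + d) \<ge> lmin (j + 1)"
proof (induction d)
  case 0 then show ?case by simp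
next
  case (Suc d)
  have "lmin (j + 1 + d) < lmax (j + 1 + d)" using assms(1) Suc.prems by auto
  moreover have "lmax (j + 1 + d) \<le> lmin (Suc (j + 1 + d))" using assms(2) Suc.prems by auto
  ultimately show ?case using Suc by auto
qed

theorem corollary1p4:
  fixes a b :: "int \<Rightarrow> real" and p :: nat and lmin lmax :: "nat \<Rightarrow> real"
  assumes "p \<ge> 2"
    and "\<forall>n. a n > 0"
    and "\<forall>n. a (n + int p) = a n"
    and "\<forall>n. b (n + int p) = b n"
    and "band_edges a b p lmin lmax"
    and "4 * Min (gap_len lmin lmax ` {1..p-1})
           \<ge> max (Max (band_len lmin lmax ` {1..p})) (4 * geo_A a p)"
  shows "Min (band_len lmin lmax ` {1..p})
           \<le> 4 * geo_A a p ^ p / (Min (gap_len lmin lmax ` {1..p-1})) ^ (p - 1)"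
proof -
  define g where "g = Min (gap_len lmin lmax ` {1..p-1})"
  define A where "A = geo_A a p"
  define Pa where "Pa = (\<Prod>n=1..p. a (int n))"
  have apos: "\<forall>n. a n > 0" using assms(2) .
  have Pa_pos: "Pa > 0" unfolding Pa_def using apos by (simp add: prod_pos)
  have A_pos: "A > 0" unfolding A_def geo_A_def using Pa_pos Pa_def apos by (simp add: less_imp_neq[symmetric])
  have Ap: "A ^ p = Pa"
  proof -
    have "A ^ p = A powr real p" using A_pos by (simp add: powr_realpow)
    also have "\<dots> = Pa powr (1 / real p * real p)" unfolding A_def geo_A_def Pa_def[symmetric]
      by (simp add: powr_powr)
    also have "\<dots> = Pa" using assms(1) Pa_pos by simp
    finally show ?thesis .
  qed
  have gA: "g \<ge> A" using assms(6) unfolding g_def A_def by linarith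
  have g_pos: "g > 0" using gA A_pos by linarith
  have gap1: "lmin 2 - lmax 1 \<ge> g"
  proof -
    have "1 \<in> {1..p-1}" using assms(1) by auto
    then have "g \<le> gap_len lmin lmax 1" unfolding g_def by (intro Min_le) auto
    then show ?thesis by (simp add: gap_len_def numeral_2_eq_2)
  qed
  have be: "\<forall>n\<in>{1..p}. lmin n < lmax n" "\<forall>n\<in>{1..<p}. lmax n \<le> lmin (Suc n)"
    "\<forall>n\<in>{1..p}. (mono_on {lmin n..lmax n} (discriminant a b p) \<or>
                   antimono_on {lmin n..lmax n} (discriminant a b p)) \<and>
                  discriminant a b p ` {lmin n..lmax n} = {-2..2}"
    using assms(5) unfolding band_edges_def by auto
  obtain D where D: "\<forall>lam. discriminant a b p lam = poly D lam" and dD: "degree D = p"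
    and lD: "lead_coeff D = (\<Prod>i=1..p. 1 / a (int i))"
    using disc_poly[OF apos, of p b] assms(1) by auto
  have lD': "lead_coeff D = 1 / Pa" unfolding lD Pa_def by (simp add: prod_dividef)
  have "\<forall>n\<in>{1..p}. \<exists>z\<in>{lmin n..lmax n}. discriminant a b p z = 0"
  proof
    fix n assume "n \<in> {1..p}"
    then have "0 \<in> discriminant a b p ` {lmin n..lmax n}" using be(3) by auto
    then show "\<exists>z\<in>{lmin n..lmax n}. discriminant a b p z = 0" by (metis imageE)
  qed
  then obtain zf where zf: "\<forall>n\<in>{1..p}. zf n \<in> {lmin n..lmax n} \<and> discriminant a b p (zf n) = 0"
    by metis
  have lmin_ge: "lmin k \<ge> lmin (j + 1)" if "1 \<le> j" "j < k" "k \<le> p" for j k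
    using lmin_chain[OF be(1) be(2) that(1), of "k - j - 1"] that by simp
  have sep: "zf j < zf k" if "1 \<le> j" "j < k" "k \<le> p" for j k
  proof -
    have "j \<in> {1..p-1}" using that by auto
    then have "g \<le> gap_len lmin lmax j" unfolding g_def by (intro Min_le) auto
    then have "lmax j + g \<le> lmin (j + 1)" by (simp add: gap_len_def)
    moreover have "lmin (j+1) \<le> lmin k" using lmin_ge that by blast
    moreover have "zf j \<le> lmax j" "lmin k \<le> zf k" using zf that by auto
    ultimately show ?thesis using g_pos
      by linarith
  qed
  have inj: "inj_on zf {1..p}"
  proof (rule inj_onI)
    fix x y assume "x \<in> {1..p}" "y \<in> {1..p}" "zf x = zf y"
    then show "x = y" using sep[of x y] sep[of y x] by (cases x y rule: linorder_cases) auto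
  qed
  define S where "S = zf ` {1..p}"
  have cardS: "card S = degree D" unfolding S_def using card_image[OF inj] dD by simp
  have D0: "D \<noteq> 0" using lD' Pa_pos by auto
  have factor: "discriminant a b p x = (1 / Pa) * (\<Prod>k\<in>{1..p}. x - zf k)" for x
  proof -
    have "poly D x = lead_coeff D * (\<Prod>z\<in>S. x - z)"
      by (rule poly_roots_prod) (use cardS D0 zf D in \<open>auto simp: S_def\<close>)
    also have "(\<Prod>z\<in>S. x - z) = (\<Prod>k\<in>{1..p}. x - zf k)" unfolding S_def
      by (rule prod.reindex[OF inj, unfolded comp_def])
    finally show ?thesis using D lD' by simp
  qed
  have l1: "lmin 1 < lmax 1" using be(1) assms(1) by auto
  have ends: "\<bar>discriminant a b p (lmin 1)\<bar> = 2 \<and> \<bar>discriminant a b p (lmax 1)\<bar> = 2"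
    using endpoints_two[of "lmin 1" "lmax 1" "discriminant a b p"] be(3) assms(1) l1 by auto
  have z1: "zf 1 \<in> {lmin 1..lmax 1}" using zf assms(1) by auto
  have bound: "\<bar>x - zf 1\<bar> \<le> 2 * Pa / g ^ (p - 1)" if x: "x \<in> {lmin 1..lmax 1}" "\<bar>discriminant a b p x\<bar> = 2" for x
  proof -
    have split: "(\<Prod>k\<in>{1..p}. x - zf k) = (x - zf 1) * (\<Prod>k\<in>{2..p}. x - zf k)"
      using assms(1) by (simp add: prod.atLeast_Suc_atMost numeral_2_eq_2)
    have each: "g \<le> \<bar>x - zf k\<bar>" if "k \<in> {2..p}" for k
    proof -
      have "lmin 2 \<le> lmin k" using lmin_ge[of 1 k] that by (auto simp: numeral_2_eq_2)
      moreover have "lmin k \<le> zf k" using zf that by auto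
      ultimately show ?thesis using gap1 x(1) by auto
    qed
    have "(\<Prod>k\<in>{2..p}. g) \<le> (\<Prod>k\<in>{2..p}. \<bar>x - zf k\<bar>)"
      by (rule prod_mono) (use each g_pos in auto)
    then have pg: "g ^ (p - 1) \<le> \<bar>\<Prod>k\<in>{2..p}. x - zf k\<bar>" by (simp add: abs_prod)
    have "2 = \<bar>x - zf 1\<bar> * \<bar>\<Prod>k\<in>{2..p}. x - zf k\<bar> / Pa"
      using x(2) factor[of x] split Pa_pos by (simp add: abs_mult)
    then have eq: "2 * Pa = \<bar>x - zf 1\<bar> * \<bar>\<Prod>k\<in>{2..p}. x - zf k\<bar>" using Pa_pos by (simp add: field_simps)
    have "\<bar>x - zf 1\<bar> * g ^ (p - 1) \<le> 2 * Pa" unfolding eq by (rule mult_left_mono[OF pg]) simp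
    then show ?thesis using g_pos by (simp add: field_simps)
  qed
  have "band_len lmin lmax 1 = (lmax 1 - zf 1) + (zf 1 - lmin 1)" by (simp add: band_len_def)
  also have "\<dots> \<le> 2 * Pa / g ^ (p - 1) + 2 * Pa / g ^ (p - 1)"
    using bound[of "lmax 1"] bound[of "lmin 1"] ends z1 l1 by fastforce
  also have "\<dots> = 4 * A ^ p / g ^ (p - 1)" using Ap by simp
  finally have b1: "band_len lmin lmax 1 \<le> 4 * A ^ p / g ^ (p - 1)" .
  have "Min (band_len lmin lmax ` {1..p}) \<le> band_len lmin lmax 1"
    using assms(1) by (intro Min_le) auto
  then show ?thesis using b1 unfolding g_def A_def by linarith
qed

end
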